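(* Let $\mathbb{C}$ be a locally small category and $\mathbb{C}_{\mathit{fin}}$ a full subcategory satisfying (C1)–(C5) below. Let $\mathbb{A}$ be a full subcategory of $\mathbb{C}_{\mathit{fin}}$ and let $F\in\mathrm{Ob}(\mathbb{C})$ be universal and locally finite for $\mathbb{A}$. If $\mathbb{A}$ has finite Ramsey degrees, then for every $A\in\mathrm{Ob}(\mathbb{A})$ there exists an essential coloring $\gamma_A:\hom(A,F)\to\{0,\dots,t_{\mathbb{A}}(A)-1\}$.
   Context: Write $A\to B$ if $\hom(A,B)\ne\varnothing$. Conditions: (C1) all morphisms of $\mathbb{C}$ are monomorphisms; (C2) $\mathrm{Ob}(\mathbb{C}_{\mathit{fin}})$ is a set; (C3) $\hom(A,B)$ is finite for $A,B\in\mathrm{Ob}(\mathbb{C}_{\mathit{fin}})$; (C4) for every $F\in\mathrm{Ob}(\mathbb{C})$ there is $A\in\mathrm{Ob}(\mathbb{C}_{\mathit{fin}})$ with $A\to F$; (C5) for every $B\in\mathrm{Ob}(\mathbb{C}_{\mathit{fin}})$ the set $\{A\in\mathrm{Ob}(\mathbb{C}_{\mathit{fin}}):A\to B\}$ is finite. $F$ is universal for $\mathbb{A}$ if $A\to F$ for all $A\in\mathrm{Ob}(\mathbb{A})$. $F$ is locally finite for $\mathbb{A}$ if for all $A,B\in\mathrm{Ob}(\mathbb{A})$, $e\in\hom(A,F)$, $f\in\hom(B,F)$ there exist $D\in\mathrm{Ob}(\mathbb{A})$, $r\in\hom(D,F)$, $p\in\hom(A,D)$, $q\in\hom(B,D)$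 with $r\cdot p=e$, $r\cdot q=f$, such that for every $H\in\mathrm{Ob}(\mathbb{C})$, $r'\in\hom(H,F)$, $p'\in\hom(A,H)$, $q'\in\hom(B,H)$ with $r'\cdot p'=e$, $r'\cdot q'=f$ there is $s\in\hom(D,H)$ with $r'\cdot s=r$, $s\cdot p=p'$, $s\cdot q=q'$. $C\to(B)^A_{k,t}$ means that for every $\chi:\hom(A,C)\to\{0,\dots,k-1\}$ there is $w\in\hom(B,C)$ with $|\chi(w\cdot\hom(A,B))|\le t$. $t_{\mathbb{A}}(A)$ is the least positive $n$ such that for all $k\ge2$ and all $B\in\mathrm{Ob}(\mathbb{A})$ there is $C\in\mathrm{Ob}(\mathbb{A})$ with $C\to(B)^A_{k,n}$, and $\infty$ otherwise; $\mathbb{A}$ has finite Ramsey degrees if $t_{\mathbb{A}}(A)<\infty$ for all $A$. For $\chi:\hom(A,F)\to\{0,\dots,k-1\}$ and $w\in\hom(B,F)$, $\chi^{(w)}(f)=\chi(w\cdot f)$; $\ker g=\{(x,y):g(x)=g(y)\}$. For a positive integer $t$, a coloring $\lambda:\hom(A,B)\to\{0,\dots,t-1\}$ is essential at $B$ if for every $k\ge2$ and every $\chi:\hom(A,F)\to\{0,\dots,k-1\}$ there is $w\in\hom(B,F)$ with $\ker\lambda\subseteq\ker\chi^{(w)}$; a coloring $\gamma:\hom(A,F)\to\{0,\dots,t-1\}$ is essential if $\gamma^{(w)}$ is essential at $B$ for every $B\in\mathrm{Ob}(\mathbb{A})$ with $A\to B$ and every $w\in\hom(B,F)$. *)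

theory Defs
  imports Main "HOL-Library.Extended_Nat"
begin

text \<open>A category given by a set of objects, hom-sets, composition (comp g f = g \<cdot> f,
 first f then g) and identities. Locally small: hom-sets are sets (automatic in HOL).\<close>

record ('o, 'm) cat =
  Obj :: "'o set"
  Hom :: "'o \<Rightarrow> 'o \<Rightarrow> 'm set"
  Comp :: "'m \<Rightarrow> 'm \<Rightarrow> 'm"
  Ide :: "'o \<Rightarrow> 'm"

definition category :: "('o, 'm) cat \<Rightarrow> bool" where
  "category C \<longleftrightarrow>
     (\<forall>A\<in>Obj C. \<forall>B\<in>Obj C. \<forall>A'\<in>Obj C. \<forall>B'\<in>Obj C. \<forall>f.
        f \<in> Hom C A B \<longrightarrow> f \<in> Hom C A' B' \<longrightarrow> A = A' \<and> B = B') \<and>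
     (\<forall>A\<in>Obj C. \<forall>B\<in>Obj C. \<forall>D\<in>Obj C. \<forall>f\<in>Hom C A B. \<forall>g\<in>Hom C B D.
        Comp C g f \<in> Hom C A D) \<and>
     (\<forall>A\<in>Obj C. \<forall>B\<in>Obj C. \<forall>D\<in>Obj C. \<forall>E\<in>Obj C.
        \<forall>f\<in>Hom C A B. \<forall>g\<in>Hom C B D. \<forall>h\<in>Hom C D E.
        Comp C h (Comp C g f) = Comp C (Comp C h g) f) \<and>
     (\<forall>A\<in>Obj C. Ide C A \<in> Hom C A A) \<and>
     (\<forall>A\<in>Obj C. \<forall>B\<in>Obj C. \<forall>f\<in>Hom C A B.
        Comp C (Ide C B) f = f \<and> Comp C f (Ide C A) = f)"

definition arrow :: "('o, 'm) cat \<Rightarrow> 'o \<Rightarrow> 'o \<Rightarrow> bool" where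
  "arrow C A B \<longleftrightarrow> Hom C A B \<noteq> {}"

definition mono :: "('o, 'm) cat \<Rightarrow> 'o \<Rightarrow> 'o \<Rightarrow> 'm \<Rightarrow> bool" where
  "mono C A B f \<longleftrightarrow>
     (\<forall>X\<in>Obj C. \<forall>g\<in>Hom C X A. \<forall>h\<in>Hom C X A. Comp C f g = Comp C f h \<longrightarrow> g = h)"

text \<open>Conditions (C1)--(C5) for the full subcategory with object set Cfin.
 (C2), that Ob(Cfin) is a set, holds automatically in HOL.\<close>

definition conditions_C1_C5 :: "('o, 'm) cat \<Rightarrow> 'o set \<Rightarrow> bool" where
  "conditions_C1_C5 C Cfin \<longleftrightarrow>
     Cfin \<subseteq> Obj C \<and>
     (\<forall>A\<in>Obj C. \<forall>B\<in>Obj C. \<forall>f\<in>Hom C A B. mono C A B f) \<and>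
     (\<forall>A\<in>Cfin. \<forall>B\<in>Cfin. finite (Hom C A B)) \<and>
     (\<forall>F\<in>Obj C. \<exists>A\<in>Cfin. arrow C A F) \<and>
     (\<forall>B\<in>Cfin. finite {A\<in>Cfin. arrow C A B})"

definition universal :: "('o, 'm) cat \<Rightarrow> 'o set \<Rightarrow> 'o \<Rightarrow> bool" where
  "universal C Aset F \<longleftrightarrow> (\<forall>A\<in>Aset. arrow C A F)"

definition locally_finite :: "('o, 'm) cat \<Rightarrow> 'o set \<Rightarrow> 'o \<Rightarrow> bool" where
  "locally_finite C Aset F \<longleftrightarrow>
     (\<forall>A\<in>Aset. \<forall>B\<in>Aset. \<forall>e\<in>Hom C A F. \<forall>f\<in>Hom C B F.
       \<exists>D\<in>Aset. \<exists>r\<in>Hom C D F. \<exists>p\<in>Hom C A D. \<exists>q\<in>Hom C B D.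
         Comp C r p = e \<and> Comp C r q = f \<and>
         (\<forall>H\<in>Obj C. \<forall>r'\<in>Hom C H F. \<forall>p'\<in>Hom C A H. \<forall>q'\<in>Hom C B H.
            Comp C r' p' = e \<longrightarrow> Comp C r' q' = f \<longrightarrow>
            (\<exists>s\<in>Hom C D H. Comp C r' s = r \<and> Comp C s p = p' \<and> Comp C s q = q')))"

definition ramsey_arrow ::
  "('o, 'm) cat \<Rightarrow> 'o \<Rightarrow> 'o \<Rightarrow> 'o \<Rightarrow> nat \<Rightarrow> nat \<Rightarrow> bool" where
  "ramsey_arrow C Cc B A k t \<longleftrightarrow>
     (\<forall>\<chi> :: 'm \<Rightarrow> nat. \<chi> ` Hom C A Cc \<subseteq> {..<k} \<longrightarrow>
        (\<exists>w\<in>Hom C B Cc. card (\<chi> ` ((\<lambda>f. Comp C w f) ` Hom C A B)) \<le> t))"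

definition ramsey_bound :: "('o, 'm) cat \<Rightarrow> 'o set \<Rightarrow> 'o \<Rightarrow> nat \<Rightarrow> bool" where
  "ramsey_bound C Aset A n \<longleftrightarrow>
     (\<forall>k\<ge>2. \<forall>B\<in>Aset. \<exists>Cc\<in>Aset. ramsey_arrow C Cc B A k n)"

definition ramsey_degree :: "('o, 'm) cat \<Rightarrow> 'o set \<Rightarrow> 'o \<Rightarrow> enat" where
  "ramsey_degree C Aset A =
     (if \<exists>n>0. ramsey_bound C Aset A n
      then enat (LEAST n. n > 0 \<and> ramsey_bound C Aset A n) else \<infinity>)"

definition finite_ramsey_degrees :: "('o, 'm) cat \<Rightarrow> 'o set \<Rightarrow> bool" where
  "finite_ramsey_degrees C Aset \<longleftrightarrow> (\<forall>A\<in>Aset. ramsey_degree C Aset A < \<infinity>)"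

definition ker_on :: "'m set \<Rightarrow> ('m \<Rightarrow> nat) \<Rightarrow> ('m \<times> 'm) set" where
  "ker_on X g = {(x, y). x \<in> X \<and> y \<in> X \<and> g x = g y}"

definition recolor :: "('o, 'm) cat \<Rightarrow> ('m \<Rightarrow> nat) \<Rightarrow> 'm \<Rightarrow> 'm \<Rightarrow> nat" where
  "recolor C \<chi> w = (\<lambda>f. \<chi> (Comp C w f))"

definition essential_at ::
  "('o, 'm) cat \<Rightarrow> 'o \<Rightarrow> nat \<Rightarrow> 'o \<Rightarrow> 'o \<Rightarrow> ('m \<Rightarrow> nat) \<Rightarrow> bool" where
  "essential_at C F t A B lam \<longleftrightarrow>
     t > 0 \<and> lam ` Hom C A B \<subseteq> {..<t} \<and>
     (\<forall>k\<ge>2. \<forall>\<chi> :: 'm \<Rightarrow> nat. \<chi> ` Hom C A F \<subseteq> {..<k} \<longrightarrow>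
        (\<exists>w\<in>Hom C B F. ker_on (Hom C A B) lam \<subseteq> ker_on (Hom C A B) (recolor C \<chi> w)))"

definition essential ::
  "('o, 'm) cat \<Rightarrow> 'o set \<Rightarrow> 'o \<Rightarrow> nat \<Rightarrow> 'o \<Rightarrow> ('m \<Rightarrow> nat) \<Rightarrow> bool" where
  "essential C Aset F t A \<gamma> \<longleftrightarrow>
     t > 0 \<and> \<gamma> ` Hom C A F \<subseteq> {..<t} \<and>
     (\<forall>B\<in>Aset. arrow C A B \<longrightarrow>
        (\<forall>w\<in>Hom C B F. essential_at C F t A B (recolor C \<gamma> w)))"

end

theory Submission
  imports Defs "HOL-Analysis.Analysis"
begin


lemma open_nbhd:
  assumes "finite S" "S \<subseteq> I" "c \<in> topspace (product_topology (\<lambda>_. discrete_topology V) I)"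
  shows "openin (product_topology (\<lambda>_. discrete_topology V) I)
           {g \<in> topspace (product_topology (\<lambda>_. discrete_topology V) I). \<forall>i\<in>S. g i = c i}"
  using assms(1,2)
proof (induction S rule: finite_induct)
  case empty
  then show ?case by (simp del: topspace_product_topology)
next
  case (insert x S)
  let ?X = "product_topology (\<lambda>_. discrete_topology V) I"
  have "x \<in> I" using insert by auto
  have cx: "c x \<in> V" using assms(3) \<open>x \<in> I\<close> by (auto simp: PiE_iff)
  have o1: "openin ?X {g \<in> topspace ?X. g x \<in> {c x}}"
    by (rule openin_continuous_map_preimage[OF continuous_map_product_projection[OF \<open>x \<in> I\<close>]])
       (use cx in auto)
  have "{g \<in> topspace ?X. \<forall>i\<in>insert x S. g i = c i} =
        {g \<in> topspace ?X. g x \<in> {c x}} \<inter> {g \<in> topspace ?X. \<forall>i\<in>S. g i = c i}" by auto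
  then show ?case using o1 insert by auto
qed

lemma closed_finite_dep:
  assumes "finite S" "S \<subseteq> I"
    and dep: "\<And>g g'. (\<forall>i\<in>S. g i = g' i) \<Longrightarrow> P g = P g'"
  shows "closedin (product_topology (\<lambda>_. discrete_topology V) I)
           {g \<in> topspace (product_topology (\<lambda>_. discrete_topology V) I). P g}"
proof -
  let ?X = "product_topology (\<lambda>_. discrete_topology V) I"
  have "openin ?X (topspace ?X - {g \<in> topspace ?X. P g})"
  proof (subst openin_subopen, intro ballI)
    fix c assume c: "c \<in> topspace ?X - {g \<in> topspace ?X. P g}"
    let ?N = "{g \<in> topspace ?X. \<forall>i\<in>S. g i = c i}"
    have "openin ?X ?N" using open_nbhd[OF assms(1,2)] c by blast
    moreover have "c \<in> ?N" using c by auto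
    moreover have "?N \<subseteq> topspace ?X - {g \<in> topspace ?X. P g}"
      using c dep by auto
    ultimately show "\<exists>T. openin ?X T \<and> c \<in> T \<and> T \<subseteq> topspace ?X - {g \<in> topspace ?X. P g}" by blast
  qed
  then show ?thesis by (simp add: closedin_def)
qed

lemma compact_fin:
  assumes "finite V"
  shows "compact_space (product_topology (\<lambda>_. discrete_topology V) I)"
  using assms by (simp add: compact_space_product_topology compact_space_discrete_topology)



locale setting =
  fixes C :: "('o, 'm) cat" and Cfin :: "'o set" and Aset :: "'o set" and F :: 'o
  assumes cat: "category C" and cond: "conditions_C1_C5 C Cfin" and AC: "Aset \<subseteq> Cfin"
    and FO: "F \<in> Obj C" and univ: "universal C Aset F" and lf: "locally_finite C Aset F"
begin

lemma AO: "X \<in> Aset \<Longrightarrow> X \<in> Obj C"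
  using AC cond unfolding conditions_C1_C5_def by blast

lemma comp: "X \<in> Obj C \<Longrightarrow> Y \<in> Obj C \<Longrightarrow> Z \<in> Obj C \<Longrightarrow> f \<in> Hom C X Y \<Longrightarrow> g \<in> Hom C Y Z
  \<Longrightarrow> Comp C g f \<in> Hom C X Z"
  using cat unfolding category_def by blast

lemma assoc: "X \<in> Obj C \<Longrightarrow> Y \<in> Obj C \<Longrightarrow> Z \<in> Obj C \<Longrightarrow> W \<in> Obj C \<Longrightarrow>
  f \<in> Hom C X Y \<Longrightarrow> g \<in> Hom C Y Z \<Longrightarrow> h \<in> Hom C Z W \<Longrightarrow>
  Comp C h (Comp C g f) = Comp C (Comp C h g) f"
  using cat unfolding category_def by blast

lemma monoD: "X \<in> Obj C \<Longrightarrow> Y \<in> Obj C \<Longrightarrow> Z \<in> Obj C \<Longrightarrow> f \<in> Hom C Y Z \<Longrightarrow>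
  g \<in> Hom C X Y \<Longrightarrow> h \<in> Hom C X Y \<Longrightarrow> Comp C f g = Comp C f h \<Longrightarrow> g = h"
  using cond unfolding conditions_C1_C5_def mono_def by blast

lemma fin_hom: "X \<in> Aset \<Longrightarrow> Y \<in> Aset \<Longrightarrow> finite (Hom C X Y)"
  using AC cond unfolding conditions_C1_C5_def by blast

lemma ker_on_cong: "(\<And>x. x \<in> X \<Longrightarrow> g x = g' x) \<Longrightarrow> ker_on X g = ker_on X g'"
  unfolding ker_on_def by auto

definition U :: "'o \<Rightarrow> 'o \<Rightarrow> ('m \<times> 'm) set set" where
  "U A B = {Q. \<forall>k\<ge>2. \<forall>(ch::'m \<Rightarrow> nat). ch ` Hom C A F \<subseteq> {..<k} \<longrightarrow>
      (\<exists>w'\<in>Hom C B F. Q \<subseteq> ker_on (Hom C A B) (recolor C ch w'))}"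

lemma amalg:
  assumes "finite W" "A \<in> Aset" "\<forall>(B,w)\<in>W. B \<in> Aset \<and> w \<in> Hom C B F"
  shows "\<exists>D\<in>Aset. \<exists>r\<in>Hom C D F. \<forall>(B,w)\<in>W. \<exists>p\<in>Hom C B D. Comp C r p = w"
  using assms(1,3)
proof (induction W rule: finite_induct)
  case empty
  then show ?case using assms(2) univ unfolding universal_def arrow_def by blast
next
  case (insert x W)
  obtain B w where x: "x = (B, w)" by force
  have Bw: "B \<in> Aset" "w \<in> Hom C B F" using insert.prems x by auto
  from insert obtain D r where D: "D \<in> Aset" "r \<in> Hom C D F"
    and Dp: "\<forall>(B,w)\<in>W. \<exists>p\<in>Hom C B D. Comp C r p = w" by auto
  have "\<exists>D'\<in>Aset. \<exists>r'\<in>Hom C D' F. \<exists>p\<in>Hom C D D'. \<exists>q\<in>Hom C B D'.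
         Comp C r' p = r \<and> Comp C r' q = w"
    using lf[unfolded locally_finite_def, rule_format, OF D(1) Bw(1) D(2) Bw(2)] by blast
  then obtain D' r' p q where D': "D' \<in> Aset" "r' \<in> Hom C D' F" "p \<in> Hom C D D'"
      "q \<in> Hom C B D'" "Comp C r' p = r" "Comp C r' q = w"
    by blast
  have "\<forall>(B1,w1)\<in>W. \<exists>p1\<in>Hom C B1 D'. Comp C r' p1 = w1"
  proof (clarify)
    fix B1 w1 assume "(B1, w1) \<in> W"
    have "\<exists>p\<in>Hom C B1 D. Comp C r p = w1" using bspec[OF Dp \<open>(B1, w1) \<in> W\<close>] by simp
    then obtain p0 where p0: "p0 \<in> Hom C B1 D" "Comp C r p0 = w1" by blast
    have B1: "B1 \<in> Aset" using insert.prems \<open>(B1, w1) \<in> W\<close> by auto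
    show "\<exists>p1\<in>Hom C B1 D'. Comp C r' p1 = w1"
    proof (intro bexI)
      show "Comp C p p0 \<in> Hom C B1 D'" using comp[OF AO[OF B1] AO[OF D(1)] AO[OF D'(1)] p0(1) D'(3)] .
      show "Comp C r' (Comp C p p0) = w1"
        using assoc[OF AO[OF B1] AO[OF D(1)] AO[OF D'(1)] FO p0(1) D'(3) D'(2)] D' p0 by simp
    qed
  qed
  then have "\<forall>(B1,w1)\<in>insert x W. \<exists>p1\<in>Hom C B1 D'. Comp C r' p1 = w1"
    using D'(4,6) x by auto
  then show ?case using D'(1,2) by blast
qed

lemma ramsey_F:
  assumes A: "A \<in> Aset" and D: "D \<in> Aset" and rb: "ramsey_bound C Aset A t"
    and k: "(k::nat) \<ge> 2" and ch: "(ch::'m\<Rightarrow>nat) ` Hom C A F \<subseteq> {..<k}"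
  shows "\<exists>v\<in>Hom C D F. card ((\<lambda>g. ch (Comp C v g)) ` Hom C A D) \<le> t"
proof -
  obtain Cc where Cc: "Cc \<in> Aset" "ramsey_arrow C Cc D A k t"
    using rb k D unfolding ramsey_bound_def by blast
  obtain u where u: "u \<in> Hom C Cc F" using univ Cc unfolding universal_def arrow_def by blast
  have "(\<lambda>g. ch (Comp C u g)) ` Hom C A Cc \<subseteq> {..<k}"
    using ch comp[OF AO[OF A] AO[OF Cc(1)] FO _ u] by blast
  then obtain w where w: "w \<in> Hom C D Cc"
    and cw: "card ((\<lambda>g. ch (Comp C u g)) ` ((\<lambda>f. Comp C w f) ` Hom C A D)) \<le> t"
    using Cc(2) unfolding ramsey_arrow_def by blast
  have eq: "(\<lambda>g. ch (Comp C u g)) ` ((\<lambda>f. Comp C w f) ` Hom C A D) =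
            (\<lambda>g. ch (Comp C (Comp C u w) g)) ` Hom C A D"
    using assoc[OF AO[OF A] AO[OF D] AO[OF Cc(1)] FO _ w u] by (force simp: image_image)
  show ?thesis
  proof (intro bexI)
    show "Comp C u w \<in> Hom C D F" using comp[OF AO[OF D] AO[OF Cc(1)] FO w u] .
    show "card ((\<lambda>g. ch (Comp C (Comp C u w) g)) ` Hom C A D) \<le> t" using cw eq by simp
  qed
qed

lemma finite_arg:
  assumes A: "A \<in> Aset" and D: "D \<in> Aset" and rb: "ramsey_bound C Aset A t"
  shows "\<exists>lam. lam ` Hom C A D \<subseteq> {..<t} \<and>
           (\<forall>B\<in>Aset. \<forall>p\<in>Hom C B D. ker_on (Hom C A B) (recolor C lam p) \<in> U A B)"
proof (rule ccontr)
  assume neg: "\<not> ?thesis"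
  define L where "L = (\<Pi>\<^sub>E g\<in>Hom C A D. {..<t})"
  have finL: "finite L" unfolding L_def using fin_hom[OF A D] by (simp add: finite_PiE)
  have "\<forall>l\<in>L. \<exists>B p k ch. B \<in> Aset \<and> p \<in> Hom C B D \<and> k \<ge> 2 \<and> ch ` Hom C A F \<subseteq> {..<k} \<and>
          (\<forall>w'\<in>Hom C B F. \<not> ker_on (Hom C A B) (recolor C l p) \<subseteq> ker_on (Hom C A B) (recolor C ch w'))"
  proof
    fix l assume "l \<in> L"
    then have "l ` Hom C A D \<subseteq> {..<t}" unfolding L_def by auto
    then obtain B p where "B \<in> Aset" "p \<in> Hom C B D" "ker_on (Hom C A B) (recolor C l p) \<notin> U A B"
      using neg by blast
    then show "\<exists>B p k ch. B \<in> Aset \<and> p \<in> Hom C B D \<and> k \<ge> 2 \<and> ch ` Hom C A F \<subseteq> {..<k} \<and>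
          (\<forall>w'\<in>Hom C B F. \<not> ker_on (Hom C A B) (recolor C l p) \<subseteq> ker_on (Hom C A B) (recolor C ch w'))"
      unfolding U_def by blast
  qed
  then obtain Bf pf kf chf where sk: "\<And>l. l \<in> L \<Longrightarrow> Bf l \<in> Aset \<and> pf l \<in> Hom C (Bf l) D \<and> kf l \<ge> 2 \<and>
       chf l ` Hom C A F \<subseteq> {..<kf l} \<and>
       (\<forall>w'\<in>Hom C (Bf l) F. \<not> ker_on (Hom C A (Bf l)) (recolor C l (pf l)) \<subseteq> ker_on (Hom C A (Bf l)) (recolor C (chf l) w'))"
    by metis
  define Phi where "Phi = (\<lambda>f. \<lambda>l\<in>L. chf l f)"
  define S where "S = Phi ` Hom C A F"
  have "S \<subseteq> (\<Pi>\<^sub>E l\<in>L. {..<kf l})" unfolding S_def Phi_def using sk by fastforce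
  then have finS: "finite S" using finL by (meson finite_PiE finite_lessThan finite_subset)
  obtain enc where enc: "bij_betw enc S {0..<card S}" using ex_bij_betw_finite_nat[OF finS] by blast
  define k where "k = max 2 (card S)"
  define ch where "ch = (\<lambda>f. enc (Phi f))"
  have chk: "ch ` Hom C A F \<subseteq> {..<k}"
  proof
    fix x assume "x \<in> ch ` Hom C A F"
    then obtain f where f: "f \<in> Hom C A F" "x = enc (Phi f)" unfolding ch_def by blast
    then have "Phi f \<in> S" unfolding S_def by blast
    then have "enc (Phi f) < card S" using enc unfolding bij_betw_def by auto
    then show "x \<in> {..<k}" using f k_def by auto
  qed
  obtain v where v: "v \<in> Hom C D F" and cv: "card ((\<lambda>g. ch (Comp C v g)) ` Hom C A D) \<le> t"
    using ramsey_F[OF A D rb _ chk] k_def by auto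
  define V where "V = (\<lambda>g. ch (Comp C v g)) ` Hom C A D"
  have finV: "finite V" unfolding V_def using fin_hom[OF A D] by simp
  obtain e where e: "bij_betw e V {0..<card V}" using ex_bij_betw_finite_nat[OF finV] by blast
  define l0 where "l0 = (\<lambda>g\<in>Hom C A D. e (ch (Comp C v g)))"
  have l0L: "l0 \<in> L"
  proof -
    have "\<And>g. g \<in> Hom C A D \<Longrightarrow> e (ch (Comp C v g)) < t"
    proof -
      fix g assume "g \<in> Hom C A D"
      then have "ch (Comp C v g) \<in> V" unfolding V_def by blast
      then have "e (ch (Comp C v g)) < card V" using e unfolding bij_betw_def by auto
      then show "e (ch (Comp C v g)) < t" using cv V_def by simp
    qed
    then show ?thesis unfolding L_def l0_def by auto
  qed
  note s0 = sk[OF l0L]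
  define B where "B = Bf l0"
  define p where "p = pf l0"
  have B: "B \<in> Aset" and p: "p \<in> Hom C B D" using s0 B_def p_def by auto
  define w' where "w' = Comp C v p"
  have w': "w' \<in> Hom C B F" unfolding w'_def using comp[OF AO[OF B] AO[OF D] FO p v] .
  have "ker_on (Hom C A B) (recolor C l0 p) \<subseteq> ker_on (Hom C A B) (recolor C (chf l0) w')"
  proof
    fix xy assume xy: "xy \<in> ker_on (Hom C A B) (recolor C l0 p)"
    then obtain x y where xy': "xy = (x, y)" "x \<in> Hom C A B" "y \<in> Hom C A B"
      "l0 (Comp C p x) = l0 (Comp C p y)"
      unfolding ker_on_def recolor_def by auto
    have px: "Comp C p x \<in> Hom C A D" and py: "Comp C p y \<in> Hom C A D"
      using comp[OF AO[OF A] AO[OF B] AO[OF D] _ p] xy' by auto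
    have "e (ch (Comp C v (Comp C p x))) = e (ch (Comp C v (Comp C p y)))"
      using xy'(4) px py unfolding l0_def by simp
    moreover have "ch (Comp C v (Comp C p x)) \<in> V" "ch (Comp C v (Comp C p y)) \<in> V"
      unfolding V_def using px py by auto
    ultimately have "ch (Comp C v (Comp C p x)) = ch (Comp C v (Comp C p y))"
      using e unfolding bij_betw_def inj_on_def by blast
    moreover have vx: "Comp C v (Comp C p x) \<in> Hom C A F" "Comp C v (Comp C p y) \<in> Hom C A F"
      using comp[OF AO[OF A] AO[OF D] FO _ v] px py by auto
    ultimately have "Phi (Comp C v (Comp C p x)) = Phi (Comp C v (Comp C p y))"
      using enc unfolding ch_def bij_betw_def inj_on_def S_def by blast
    then have "chf l0 (Comp C v (Comp C p x)) = chf l0 (Comp C v (Comp C p y))"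
      unfolding Phi_def using l0L by (metis restrict_apply')
    moreover have "Comp C v (Comp C p x) = Comp C w' x" "Comp C v (Comp C p y) = Comp C w' y"
      unfolding w'_def using assoc[OF AO[OF A] AO[OF B] AO[OF D] FO _ p v] xy' by auto
    ultimately show "xy \<in> ker_on (Hom C A B) (recolor C (chf l0) w')"
      unfolding ker_on_def recolor_def using xy' by auto
  qed
  then show False using s0 w' B_def p_def by blast
qed

lemma main:
  assumes A: "A \<in> Aset" and t: "t > 0" and rb: "ramsey_bound C Aset A t"
  shows "\<exists>\<gamma>. essential C Aset F t A \<gamma>"
proof -
  define X where "X = product_topology (\<lambda>_. discrete_topology {..<t}) (Hom C A F)"
  define K where "K = (\<lambda>B w. {g \<in> topspace X. ker_on (Hom C A B) (recolor C g w) \<in> U A B})"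
  define UU where "UU = insert (topspace X) {K B w | B w. B \<in> Aset \<and> w \<in> Hom C B F}"
  have cs: "compact_space X" unfolding X_def by (rule compact_fin) simp
  have closed: "\<forall>M\<in>UU. closedin X M"
  proof
    fix M assume "M \<in> UU"
    then consider "M = topspace X" | B w where "B \<in> Aset" "w \<in> Hom C B F" "M = K B w"
      unfolding UU_def by blast
    then show "closedin X M"
    proof cases
      case 1 then show ?thesis by simp
    next
      case 2
      have fin: "finite ((\<lambda>x. Comp C w x) ` Hom C A B)" using fin_hom[OF A 2(1)] by simp
      have sub: "(\<lambda>x. Comp C w x) ` Hom C A B \<subseteq> Hom C A F"
        using comp[OF AO[OF A] AO[OF 2(1)] FO _ 2(2)] by blast
      have "closedin X {g \<in> topspace X. ker_on (Hom C A B) (recolor C g w) \<in> U A B}"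
        unfolding X_def
      proof (rule closed_finite_dep[OF fin sub])
        fix g g' :: "'m \<Rightarrow> nat" assume "\<forall>i\<in>(\<lambda>x. Comp C w x) ` Hom C A B. g i = g' i"
        then have "ker_on (Hom C A B) (recolor C g w) = ker_on (Hom C A B) (recolor C g' w)"
          by (intro ker_on_cong) (auto simp: recolor_def)
        then show "(ker_on (Hom C A B) (recolor C g w) \<in> U A B) = (ker_on (Hom C A B) (recolor C g' w) \<in> U A B)"
          by simp
      qed
      then show ?thesis using 2 K_def by simp
    qed
  qed
  have fip: "\<forall>FF. finite FF \<and> FF \<subseteq> UU \<longrightarrow> \<Inter>FF \<noteq> {}"
  proof (intro allI impI)
    fix FF assume FF: "finite FF \<and> FF \<subseteq> UU"
    have "\<forall>M\<in>FF - {topspace X}. \<exists>bw. fst bw \<in> Aset \<and> snd bw \<in> Hom C (fst bw) F \<and> M = K (fst bw) (snd bw)"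
    proof
      fix M assume M: "M \<in> FF - {topspace X}"
      then have "M \<in> {K B w | B w. B \<in> Aset \<and> w \<in> Hom C B F}" using FF unfolding UU_def by blast
      then obtain B w where "B \<in> Aset" "w \<in> Hom C B F" "M = K B w" by blast
      then show "\<exists>bw. fst bw \<in> Aset \<and> snd bw \<in> Hom C (fst bw) F \<and> M = K (fst bw) (snd bw)"
        by (intro exI[of _ "(B, w)"]) simp
    qed
    from bchoice[OF this] obtain h where h: "\<forall>M\<in>FF - {topspace X}. fst (h M) \<in> Aset \<and> snd (h M) \<in> Hom C (fst (h M)) F \<and> M = K (fst (h M)) (snd (h M))"
      by blast
    define W where "W = h ` (FF - {topspace X})"
    have finW: "finite W" unfolding W_def using FF by simp
    have Wok: "\<forall>(B,w)\<in>W. B \<in> Aset \<and> w \<in> Hom C B F"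
    proof (clarify)
      fix B w assume "(B, w) \<in> W"
      then obtain M where M: "(B, w) = h M" "M \<in> FF - {topspace X}" unfolding W_def by (rule imageE)
      then have "fst (h M) \<in> Aset \<and> snd (h M) \<in> Hom C (fst (h M)) F" using h by blast
      then show "B \<in> Aset \<and> w \<in> Hom C B F" using M(1) by (metis fst_conv snd_conv)
    qed
    obtain D r where D: "D \<in> Aset" "r \<in> Hom C D F" and Dp: "\<forall>(B,w)\<in>W. \<exists>p\<in>Hom C B D. Comp C r p = w"
      using amalg[OF finW A Wok] by blast
    obtain lam where lam: "lam ` Hom C A D \<subseteq> {..<t}"
      and lamU: "\<forall>B\<in>Aset. \<forall>p\<in>Hom C B D. ker_on (Hom C A B) (recolor C lam p) \<in> U A B"
      using finite_arg[OF A D(1) rb] by blast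
    define g where "g = (\<lambda>f\<in>Hom C A F. if \<exists>x\<in>Hom C A D. Comp C r x = f
       then lam (SOME x. x \<in> Hom C A D \<and> Comp C r x = f) else 0)"
    have gval: "g (Comp C r x) = lam x" if x: "x \<in> Hom C A D" for x
    proof -
      have rx: "Comp C r x \<in> Hom C A F" using comp[OF AO[OF A] AO[OF D(1)] FO x D(2)] .
      have ex: "\<exists>y. y \<in> Hom C A D \<and> Comp C r y = Comp C r x" using x by blast
      have "(SOME y. y \<in> Hom C A D \<and> Comp C r y = Comp C r x) = x"
        using someI_ex[OF ex] monoD[OF AO[OF A] AO[OF D(1)] FO D(2) _ x] by blast
      then show ?thesis unfolding g_def using rx x by auto
    qed
    have gtop: "g \<in> topspace X"
    proof -
      have "\<And>f. f \<in> Hom C A F \<Longrightarrow> g f < t"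
      proof -
        fix f assume f: "f \<in> Hom C A F"
        show "g f < t"
        proof (cases "\<exists>x\<in>Hom C A D. Comp C r x = f")
          case True
          then obtain x where "x \<in> Hom C A D" "Comp C r x = f" by blast
          then show ?thesis using gval lam by auto
        next
          case False then show ?thesis using f t unfolding g_def by simp
        qed
      qed
      then show ?thesis unfolding X_def g_def by (auto simp: PiE_iff)
    qed
    have "g \<in> \<Inter>FF"
    proof
      fix M assume M: "M \<in> FF"
      show "g \<in> M"
      proof (cases "M = topspace X")
        case True then show ?thesis using gtop by simp
      next
        case False
        define B where "B = fst (h M)"
        define w where "w = snd (h M)"
        have Bw: "B \<in> Aset" "w \<in> Hom C B F" "M = K B w" using h M False B_def w_def by auto
        have "(B, w) = h M" by (simp add: B_def w_def)
        then have "(B, w) \<in> W" unfolding W_def using M False by blast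
        have "\<exists>p\<in>Hom C B D. Comp C r p = w" using bspec[OF Dp \<open>(B, w) \<in> W\<close>] by simp
        then obtain p where p: "p \<in> Hom C B D" "Comp C r p = w" by blast
        have "ker_on (Hom C A B) (recolor C g w) = ker_on (Hom C A B) (recolor C lam p)"
        proof (rule ker_on_cong)
          fix x assume x: "x \<in> Hom C A B"
          have px: "Comp C p x \<in> Hom C A D" using comp[OF AO[OF A] AO[OF Bw(1)] AO[OF D(1)] x p(1)] .
          have "Comp C w x = Comp C r (Comp C p x)"
            using assoc[OF AO[OF A] AO[OF Bw(1)] AO[OF D(1)] FO x p(1) D(2)] p(2) by simp
          then show "recolor C g w x = recolor C lam p x" unfolding recolor_def using gval[OF px] by simp
        qed
        then show ?thesis using Bw lamU p gtop K_def by simp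
      qed
    qed
    then show "\<Inter>FF \<noteq> {}" by blast
  qed
  have "\<Inter>UU \<noteq> {}"
    using cs[unfolded compact_space_fip, rule_format, OF conjI[OF closed fip]] .
  then obtain g where g: "g \<in> \<Inter>UU" by blast
  have gt: "g \<in> topspace X" using g UU_def by blast
  then have gimg: "g ` Hom C A F \<subseteq> {..<t}" unfolding X_def by (auto simp: PiE_iff)
  have "essential C Aset F t A g"
    unfolding essential_def
  proof (intro conjI ballI impI)
    show "0 < t" by (rule t)
    show "g ` Hom C A F \<subseteq> {..<t}" by (rule gimg)
    fix B w assume B: "B \<in> Aset" and "arrow C A B" and w: "w \<in> Hom C B F"
    have "K B w \<in> UU" unfolding UU_def using B w by blast
    then have "g \<in> K B w" using g by blast
    then have kU: "ker_on (Hom C A B) (recolor C g w) \<in> U A B" unfolding K_def by simp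
    have img: "recolor C g w ` Hom C A B \<subseteq> {..<t}"
      using gimg comp[OF AO[OF A] AO[OF B] FO _ w] unfolding recolor_def by blast
    show "essential_at C F t A B (recolor C g w)"
    proof -
      have "\<forall>k\<ge>2. \<forall>ch::'m \<Rightarrow> nat. ch ` Hom C A F \<subseteq> {..<k} \<longrightarrow>
        (\<exists>w'\<in>Hom C B F. ker_on (Hom C A B) (recolor C g w) \<subseteq> ker_on (Hom C A B) (recolor C ch w'))"
        using kU unfolding U_def by (rule CollectD)
      then show ?thesis unfolding essential_at_def using t img by (intro conjI)
    qed
  qed
  then show ?thesis by blast
qed

end

theorem proposition3p6:
  fixes C :: "('o, 'm) cat" and Cfin :: "'o set" and Aset :: "'o set" and F :: 'o
  assumes "category C"
    and "conditions_C1_C5 C Cfin"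
    and "Aset \<subseteq> Cfin"
    and "F \<in> Obj C"
    and "universal C Aset F"
    and "locally_finite C Aset F"
    and "finite_ramsey_degrees C Aset"
  shows "\<forall>A\<in>Aset. \<exists>\<gamma> :: 'm \<Rightarrow> nat.
           essential C Aset F (the_enat (ramsey_degree C Aset A)) A \<gamma>"
proof
  interpret setting C Cfin Aset F using assms(1-6) by unfold_locales
  fix A assume A: "A \<in> Aset"
  have lt: "ramsey_degree C Aset A < \<infinity>" using assms(7) A unfolding finite_ramsey_degrees_def by blast
  have ex: "\<exists>n. n > 0 \<and> ramsey_bound C Aset A n"
  proof (rule ccontr)
    assume "\<not> (\<exists>n. n > 0 \<and> ramsey_bound C Aset A n)"
    then have "ramsey_degree C Aset A = \<infinity>" unfolding ramsey_degree_def by (simp only: if_False)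
    then show False using lt by simp
  qed
  have td: "the_enat (ramsey_degree C Aset A) = (LEAST n. n > 0 \<and> ramsey_bound C Aset A n)"
    unfolding ramsey_degree_def using ex by (simp only: if_True the_enat.simps)
  have L: "(LEAST n. n > 0 \<and> ramsey_bound C Aset A n) > 0 \<and> ramsey_bound C Aset A (LEAST n. n > 0 \<and> ramsey_bound C Aset A n)"
    by (rule LeastI_ex[OF ex])
  have "\<exists>\<gamma> :: 'm \<Rightarrow> nat. essential C Aset F (LEAST n. n > 0 \<and> ramsey_bound C Aset A n) A \<gamma>"
    by (rule main[OF A conjunct1[OF L] conjunct2[OF L]])
  then show "\<exists>\<gamma> :: 'm \<Rightarrow> nat. essential C Aset F (the_enat (ramsey_degree C Aset A)) A \<gamma>"
    unfolding td .
qed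

end
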